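(* The Diophantine equation $$x(x+1)\,y(y+1)=z(z+1)(z+2)(z+3)$$ has infinitely many solutions in positive integers $x,y,z$ satisfying $(z-x)(z-x+2)\neq 0$. *)

theory Defs
  imports Main
begin

end

theory Submission
  imports Defs
begin

fun pp :: "nat \<Rightarrow> int \<times> int" where
  "pp 0 = (3, 5)"
| "pp (Suc n) = (case pp n of (x, q) \<Rightarrow> (3*x + 2*q + 1, 4*x + 3*q + 2))"

lemma pp_inv: "fst (pp n) > 0 \<and> snd (pp n) > 1 \<and> (snd (pp n))^2 = 2*(fst (pp n))^2 + 2*fst (pp n) + 1"
proof (induction n)
  case 0 then show ?case by simp
next
  case (Suc n)
  obtain x q where e: "pp n = (x, q)" by force
  with Suc show ?case by (simp add: power2_eq_square algebra_simps)
qed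

lemma pp_mono: "strict_mono (\<lambda>n. fst (pp n))"
unfolding strict_mono_Suc_iff
proof
  fix n
  obtain x q where e: "pp n = (x, q)" by force
  with pp_inv[of n] show "fst (pp n) < fst (pp (Suc n))" by simp
qed

lemma key:
  fixes x q :: int
  assumes "q^2 = 2*x^2 + 2*x + 1"
  shows "x * (x + 1) * ((3*x+2*q+1) * ((3*x+2*q+1) + 1)) = (x+q-1) * ((x+q-1) + 1) * ((x+q-1) + 2) * ((x+q-1) + 3)"
proof -
  have "x * (x + 1) * ((3*x+2*q+1) * ((3*x+2*q+1) + 1)) - (x+q-1) * ((x+q-1) + 1) * ((x+q-1) + 2) * ((x+q-1) + 3)
      = (q^2 - (2*x^2 + 2*x + 1)) * (- (4*x^2 + 4*x*q + q^2 + 4*x + 2*q))"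
    by (simp add: algebra_simps power2_eq_square)
  with assms show ?thesis by simp
qed

theorem theorem3:
  shows "infinite {(x::int, y::int, z::int).
            x > 0 \<and> y > 0 \<and> z > 0 \<and>
            x * (x + 1) * (y * (y + 1)) = z * (z + 1) * (z + 2) * (z + 3) \<and>
            (z - x) * (z - x + 2) \<noteq> 0}"
proof -
  define g where "g n = (let x = fst (pp n); q = snd (pp n) in (x, 3*x+2*q+1, x+q-1))" for n
  have inj: "inj g"
  proof (rule injI)
    fix m n assume "g m = g n"
    then have "fst (pp m) = fst (pp n)" by (simp add: g_def Let_def)
    then show "m = n" using strict_mono_eq[OF pp_mono] by blast
  qed
  have sub: "range g \<subseteq> {(x::int, y::int, z::int).
            x > 0 \<and> y > 0 \<and> z > 0 \<and>
            x * (x + 1) * (y * (y + 1)) = z * (z + 1) * (z + 2) * (z + 3) \<and>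
            (z - x) * (z - x + 2) \<noteq> 0}"
  proof
    fix t assume "t \<in> range g"
    then obtain n where t: "t = g n" by blast
    obtain x q where e: "pp n = (x, q)" by force
    from pp_inv[of n] e have h: "x > 0" "q > 1" "q^2 = 2*x^2 + 2*x + 1" by auto
    have ne: "(q - 1) * (q + 1) \<noteq> 0" using h by simp
    show "t \<in> {(x::int, y::int, z::int).
            x > 0 \<and> y > 0 \<and> z > 0 \<and>
            x * (x + 1) * (y * (y + 1)) = z * (z + 1) * (z + 2) * (z + 3) \<and>
            (z - x) * (z - x + 2) \<noteq> 0}"
      using t e h key[OF h(3)] ne by (simp add: g_def Let_def algebra_simps)
  qed
  show ?thesis using infinite_super[OF sub] finite_imageD[of g UNIV] inj by blast
qed

end
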